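(* Let $G\in\mathcal C^\infty(\bar\Omega,\mathbb R^{3\times3}_{\mathrm{sym,pos}})$, $\bar{\mathcal G}=G(\cdot,0)$, and let $y_0\in\mathcal C^\infty(\bar\omega,\mathbb R^3)$ satisfy $(\nabla y_0)^{\mathsf T}\nabla y_0=\bar{\mathcal G}_{2\times2}$ and $((\nabla y_0)^{\mathsf T}\nabla\vec b_0)_{\mathrm{sym}}=\frac12\partial_3G(x',0)_{2\times2}$ on $\omega$. Then for $i,j=1,2$ and all $x'\in\omega$: $$\big[\partial_{ij}y_0,\ \partial_i\vec b_0,\ \tilde d_0\big](x')=\big[\partial_1y_0,\partial_2y_0,\vec b_0\big](x')\begin{bmatrix}\Gamma^1_{ij}&\Gamma^1_{i3}&\Gamma^1_{33}\\ \Gamma^2_{ij}&\Gamma^2_{i3}&\Gamma^2_{33}\\ \Gamma^3_{ij}&\Gamma^3_{i3}&\Gamma^3_{33}\end{bmatrix}(x',0).$$ Consequently, for every smooth $\vec q:\omega\to\mathbb R^3$, $$\Big[\big\langle\partial_iy_0,\partial_j\big(Q_0^{-\mathsf T}\vec q\big)\big\rangle\Big]_{i,j=1,2}=\big[\partial_jq_i\big]_{i,j=1,2}-\Big[\big\langle\vec q,(\Gamma^1_{ij},\Gamma^2_{ij},\Gamma^3_{ij})(x',0)\big\rangle\Big]_{i,j=1,2}.$$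
   Context: $\omega\subset\mathbb R^2$ open, bounded, connected, Lipschitz; $\Omega=\omega\times(-1/2,1/2)$. $\vec b_0=(\nabla y_0)(\bar{\mathcal G}_{2\times2})^{-1}(\bar{\mathcal G}_{13},\bar{\mathcal G}_{23})^{\mathsf T}+\sqrt{\det\bar{\mathcal G}/\det\bar{\mathcal G}_{2\times2}}\,\frac{\partial_1y_0\times\partial_2y_0}{|\partial_1y_0\times\partial_2y_0|}$; $Q_0=[\partial_1y_0,\partial_2y_0,\vec b_0]$; $\tilde d_0=Q_0^{-\mathsf T}\Big(\partial_3G(x',0)e_3-\frac12\partial_3G(x',0)_{33}e_3-\begin{bmatrix}(\nabla\vec b_0)^{\mathsf T}\vec b_0\\0\end{bmatrix}\Big)$. $\Gamma^i_{kl}=\frac12G^{im}(\partial_lG_{mk}+\partial_kG_{ml}-\partial_mG_{kl})$ are the Christoffel symbols of $G$. $F_{2\times2}$ is the principal minor. *)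

theory Defs
  imports "HOL-Analysis.Analysis" "HOL-Analysis.Cross3"
begin

primrec Ck :: "nat \<Rightarrow> 'a::real_normed_vector set \<Rightarrow> ('a \<Rightarrow> 'b::real_normed_vector) \<Rightarrow> bool" where
  "Ck 0 U f = continuous_on U f"
| "Ck (Suc n) U f = (f differentiable_on U \<and> (\<forall>v. Ck n U (\<lambda>x. frechet_derivative f (at x) v)))"

definition smooth_on :: "'a::real_normed_vector set \<Rightarrow> ('a \<Rightarrow> 'b::real_normed_vector) \<Rightarrow> bool" where
  "smooth_on U f \<longleftrightarrow> (\<forall>n. Ck n U f)"

text \<open>C-infinity up to the boundary: restriction of a smooth map on an open neighbourhood of the closure.\<close>
definition smooth_closure :: "'a::real_normed_vector set \<Rightarrow> ('a \<Rightarrow> 'b::real_normed_vector) \<Rightarrow> bool" where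
  "smooth_closure S f \<longleftrightarrow> (\<exists>U. open U \<and> closure S \<subseteq> U \<and> smooth_on U f)"

definition lipschitz_domain :: "(real^2) set \<Rightarrow> bool" where
  "lipschitz_domain U \<longleftrightarrow> open U \<and>
     (\<forall>p\<in>frontier U. \<exists>r>0. \<exists>R::real^2^2. orthogonal_matrix R \<and>
        (\<exists>(g::real\<Rightarrow>real) L. L-lipschitz_on UNIV g \<and>
           ball p r \<inter> U = {x \<in> ball p r. (R *v (x - p))$2 < g ((R *v (x - p))$1)}))"

definition lift :: "real^2 \<Rightarrow> real \<Rightarrow> real^3" where
  "lift x t = vector [x$1, x$2, t]"

definition Omega :: "(real^2) set \<Rightarrow> (real^3) set" where
  "Omega \<omega> = {lift x t | x t. x \<in> \<omega> \<and> -1/2 < t \<and> t < 1/2}"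

definition ax2 :: "nat \<Rightarrow> real^2" where
  "ax2 i = (if i = 1 then vector [1, 0] else vector [0, 1])"

definition ax3 :: "nat \<Rightarrow> real^3" where
  "ax3 i = (if i = 1 then vector [1, 0, 0] else if i = 2 then vector [0, 1, 0] else vector [0, 0, 1])"

definition pd2 :: "nat \<Rightarrow> (real^2 \<Rightarrow> 'b::real_normed_vector) \<Rightarrow> real^2 \<Rightarrow> 'b" where
  "pd2 i f x = frechet_derivative f (at x) (ax2 i)"

definition pd3 :: "nat \<Rightarrow> (real^3 \<Rightarrow> 'b::real_normed_vector) \<Rightarrow> real^3 \<Rightarrow> 'b" where
  "pd3 i f x = frechet_derivative f (at x) (ax3 i)"

definition ent :: "real^3^3 \<Rightarrow> nat \<Rightarrow> nat \<Rightarrow> real" where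
  "ent M i j = ax3 i \<bullet> (M *v ax3 j)"

definition minor22 :: "real^3^3 \<Rightarrow> real^2^2" where
  "minor22 M = vector [vector [ent M 1 1, ent M 1 2], vector [ent M 2 1, ent M 2 2]]"

definition cols2 :: "real^3 \<Rightarrow> real^3 \<Rightarrow> real^2^3" where
  "cols2 u v = transpose (vector [u, v])"

definition cols3 :: "real^3 \<Rightarrow> real^3 \<Rightarrow> real^3 \<Rightarrow> real^3^3" where
  "cols3 u v w = transpose (vector [u, v, w])"

definition jac2 :: "(real^2 \<Rightarrow> real^3) \<Rightarrow> real^2 \<Rightarrow> real^2^3" where
  "jac2 f x = cols2 (pd2 1 f x) (pd2 2 f x)"

definition symm :: "real^2^2 \<Rightarrow> real^2^2" where
  "symm A = (1/2) *\<^sub>R (A + transpose A)"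

definition christoffel :: "(real^3 \<Rightarrow> real^3^3) \<Rightarrow> real^3 \<Rightarrow> nat \<Rightarrow> nat \<Rightarrow> nat \<Rightarrow> real" where
  "christoffel G x i k l = (1/2) * (\<Sum>m\<in>{1,2,3::nat}. ent (matrix_inv (G x)) i m *
      (ent (pd3 l G x) m k + ent (pd3 k G x) m l - ent (pd3 m G x) k l))"

definition gvec :: "(real^3 \<Rightarrow> real^3^3) \<Rightarrow> real^3 \<Rightarrow> nat \<Rightarrow> nat \<Rightarrow> real^3" where
  "gvec G x k l = vector [christoffel G x 1 k l, christoffel G x 2 k l, christoffel G x 3 k l]"

definition b0 :: "(real^3 \<Rightarrow> real^3^3) \<Rightarrow> (real^2 \<Rightarrow> real^3) \<Rightarrow> real^2 \<Rightarrow> real^3" where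
  "b0 G y0 x = (let Gb = G (lift x 0); c = cross3 (pd2 1 y0 x) (pd2 2 y0 x) in
     jac2 y0 x *v (matrix_inv (minor22 Gb) *v vector [ent Gb 1 3, ent Gb 2 3])
     + sqrt (det Gb / det (minor22 Gb)) *\<^sub>R ((1 / norm c) *\<^sub>R c))"

definition Q0 :: "(real^3 \<Rightarrow> real^3^3) \<Rightarrow> (real^2 \<Rightarrow> real^3) \<Rightarrow> real^2 \<Rightarrow> real^3^3" where
  "Q0 G y0 x = cols3 (pd2 1 y0 x) (pd2 2 y0 x) (b0 G y0 x)"

definition d0 :: "(real^3 \<Rightarrow> real^3^3) \<Rightarrow> (real^2 \<Rightarrow> real^3) \<Rightarrow> real^2 \<Rightarrow> real^3" where
  "d0 G y0 x = (let D = pd3 3 G (lift x 0); b = b0 G y0 x in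
     matrix_inv (transpose (Q0 G y0 x)) *v
       (D *v ax3 3 - (1/2 * ent D 3 3) *\<^sub>R ax3 3
        - vector [pd2 1 (b0 G y0) x \<bullet> b, pd2 2 (b0 G y0) x \<bullet> b, 0]))"

end

theory Submission
  imports Defs
begin


lemma invertible_matrix_inv:
  assumes "invertible (A::real^'n^'n)"
  shows "A ** matrix_inv A = mat 1" "matrix_inv A ** A = mat 1"
  using someI_ex[OF assms[unfolded invertible_def]] unfolding matrix_inv_def by auto

lemma ent_simps:
  "ent M 1 1 = M$1$1" "ent M 1 2 = M$1$2" "ent M 1 3 = M$1$3"
  "ent M 2 1 = M$2$1" "ent M 2 2 = M$2$2" "ent M 2 3 = M$2$3"
  "ent M 3 1 = M$3$1" "ent M 3 2 = M$3$2" "ent M 3 3 = M$3$3"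
  by (simp_all add: ent_def ax3_def matrix_vector_mult_def inner_vec_def sum_3)

lemma ent_simps_Suc:
  "ent M (Suc 0) (Suc 0) = M$1$1" "ent M (Suc 0) 2 = M$1$2" "ent M (Suc 0) 3 = M$1$3"
  "ent M 2 (Suc 0) = M$2$1" "ent M 3 (Suc 0) = M$3$1"
  using ent_simps by simp_all

lemma cols3_nth: "cols3 u v w $ i $ 1 = u $ i" "cols3 u v w $ i $ 2 = v $ i" "cols3 u v w $ i $ 3 = w $ i"
  by (simp_all add: cols3_def transpose_def)

lemma cols3_mult: "cols3 u v w *v g = g$1 *\<^sub>R u + g$2 *\<^sub>R v + g$3 *\<^sub>R w"
  by (simp add: vec_eq_iff cols3_nth matrix_vector_mult_def sum_3 algebra_simps)

lemma cols3_transp_mult: "transpose (cols3 u v w) *v z = vector [u \<bullet> z, v \<bullet> z, w \<bullet> z]"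
  by (simp add: cols3_def vec_eq_iff matrix_vector_mult_def inner_vec_def forall_3 vector_3 mult.commute)

lemma mult_cols3: "M ** cols3 u v w = cols3 (M *v u) (M *v v) (M *v w)"
  by (simp add: vec_eq_iff forall_3 cols3_nth matrix_matrix_mult_def matrix_vector_mult_def)

lemma cols3_eq: "cols3 u v w = cols3 u' v' w' \<longleftrightarrow> u = u' \<and> v = v' \<and> w = w'"
  by (auto simp: vec_eq_iff forall_3 cols3_nth)

lemma gram3: "transpose (cols3 u v w) ** cols3 u v w =
   vector [vector [u\<bullet>u, u\<bullet>v, u\<bullet>w], vector [v\<bullet>u, v\<bullet>v, v\<bullet>w], vector [w\<bullet>u, w\<bullet>v, w\<bullet>w]]"
  by (simp add: vec_eq_iff forall_3 cols3_def transpose_def matrix_matrix_mult_def sum_3 inner_vec_def mult.commute)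

lemma jac2_mult: "jac2 f x *v g = g$1 *\<^sub>R pd2 1 f x + g$2 *\<^sub>R pd2 2 f x"
  by (simp add: jac2_def cols2_def vec_eq_iff transpose_def matrix_vector_mult_def sum_2 algebra_simps)

lemma jac2_gram: "transpose (jac2 f x) ** jac2 g x =
   vector [vector [pd2 1 f x \<bullet> pd2 1 g x, pd2 1 f x \<bullet> pd2 2 g x], vector [pd2 2 f x \<bullet> pd2 1 g x, pd2 2 f x \<bullet> pd2 2 g x]]"
  by (simp add: vec_eq_iff forall_2 jac2_def cols2_def transpose_def matrix_matrix_mult_def sum_2 inner_vec_def mult.commute)

lemma minor22_simps: "minor22 M = vector [vector [M$1$1, M$1$2], vector [M$2$1, M$2$2]]"
  by (simp only: minor22_def ent_simps)

lemma symm_simps: "symm (vector [vector [a, b], vector [c, d]]) = vector [vector [a, (b + c)/2], vector [(b+c)/2, d]]"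
  by (simp add: symm_def vec_eq_iff forall_2 transpose_def)

lemma vec22_eq: "(vector [vector [a, b], vector [c, d]] :: real^2^2) = vector [vector [a', b'], vector [c', d']]
   \<longleftrightarrow> a = a' \<and> b = b' \<and> c = c' \<and> d = d'"
  by (auto simp: vec_eq_iff forall_2)




lemma schwarz_half:
  fixes g :: "'a::real_normed_vector \<Rightarrow> real"
  assumes r: "0 < r" and dg: "\<And>z. z \<in> ball x r \<Longrightarrow> (g has_derivative Dg z) (at z)"
    and dL: "((\<lambda>z. Dg z u) has_derivative L) (at x)" and e: "0 < e"
  shows "\<exists>d>0. \<forall>h. 0 < h \<and> h < d \<longrightarrow>
     \<bar>g (x + h *\<^sub>R v + h *\<^sub>R u) - g (x + h *\<^sub>R u) - g (x + h *\<^sub>R v) + g x - h\<^sup>2 * L v\<bar>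
       \<le> e * h\<^sup>2 * (norm v + 2 * norm u)"
proof -
  have bl: "bounded_linear L" and "\<forall>e>0. \<exists>d>0. \<forall>y. norm (y - x) < d \<longrightarrow>
      norm (Dg y u - Dg x u - L (y - x)) \<le> e * norm (y - x)"
    using dL unfolding has_derivative_at_alt by auto
  then obtain d' where d': "d' > 0" and d'P: "\<And>y. norm (y - x) < d' \<Longrightarrow>
      \<bar>Dg y u - Dg x u - L (y - x)\<bar> \<le> e * norm (y - x)"
    using e by (metis real_norm_def)
  define d where "d = min r d' / (norm u + norm v + 1)"
  have npos: "norm u + norm v + 1 > 0" by (smt (verit) norm_ge_zero)
  have dpos: "d > 0" using r d' npos by (simp add: d_def)
  show ?thesis
  proof (intro exI[of _ d] conjI allI impI)
    show "d > 0" by (fact dpos)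
    fix h :: real assume hh: "0 < h \<and> h < d"
    have hsmall: "h * (norm u + norm v + 1) < min r d'"
      using hh npos by (simp add: d_def pos_less_divide_eq mult.commute)
    have near: "norm (h *\<^sub>R v + s *\<^sub>R u) < min r d'" "norm (s *\<^sub>R u) < min r d'"
      if "0 \<le> s" "s \<le> h" for s
    proof -
      have su: "s * norm u \<le> h * norm u" using that by (simp add: mult_right_mono)
      have hb: "h * norm v + h * norm u \<le> h * (norm u + norm v + 1)" using hh by (simp add: algebra_simps)
      have "norm (h *\<^sub>R v + s *\<^sub>R u) \<le> norm (h *\<^sub>R v) + norm (s *\<^sub>R u)"
        by (rule norm_triangle_ineq)
      also have "\<dots> = h * norm v + s * norm u" using that hh by simp
      finally show "norm (h *\<^sub>R v + s *\<^sub>R u) < min r d'" using hsmall su hb by linarith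
      have "norm (s *\<^sub>R u) = s * norm u" using that by simp
      then show "norm (s *\<^sub>R u) < min r d'" using hsmall su hb norm_ge_zero[of v] hh by (smt (verit) mult_nonneg_nonneg)
    qed
    define \<phi> where "\<phi> s = g (x + h *\<^sub>R v + s *\<^sub>R u) - g (x + s *\<^sub>R u)" for s
    have der: "(\<phi> has_real_derivative (Dg (x + h *\<^sub>R v + s *\<^sub>R u) u - Dg (x + s *\<^sub>R u) u)) (at s)"
      if "0 \<le> s" "s \<le> h" for s
    proof -
      have b1: "x + h *\<^sub>R v + s *\<^sub>R u \<in> ball x r" and b2: "x + s *\<^sub>R u \<in> ball x r"
      proof -
        have dd: "dist x (x + a) = norm a" for a by (simp add: dist_norm)
        show "x + h *\<^sub>R v + s *\<^sub>R u \<in> ball x r" "x + s *\<^sub>R u \<in> ball x r"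
          using near[OF that] dd[of "h *\<^sub>R v + s *\<^sub>R u"] dd[of "s *\<^sub>R u"] by (simp_all add: add.assoc)
      qed
      have l1: "bounded_linear (Dg (x + h *\<^sub>R v + s *\<^sub>R u))" "bounded_linear (Dg (x + s *\<^sub>R u))"
        using dg[OF b1] dg[OF b2] has_derivative_bounded_linear by blast+
      have d1: "((\<lambda>s. g (x + h *\<^sub>R v + s *\<^sub>R u)) has_derivative (\<lambda>t. Dg (x + h *\<^sub>R v + s *\<^sub>R u) (t *\<^sub>R u))) (at s)"
      proof -
        have lin1: "((\<lambda>s. x + h *\<^sub>R v + s *\<^sub>R u) has_derivative (\<lambda>t. t *\<^sub>R u)) (at s)"
          by (auto intro!: derivative_eq_intros)
        show ?thesis using has_derivative_compose[OF lin1] dg[OF b1] by blast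
      qed
      have d2: "((\<lambda>s. g (x + s *\<^sub>R u)) has_derivative (\<lambda>t. Dg (x + s *\<^sub>R u) (t *\<^sub>R u))) (at s)"
      proof -
        have lin1: "((\<lambda>s. x + s *\<^sub>R u) has_derivative (\<lambda>t. t *\<^sub>R u)) (at s)"
          by (auto intro!: derivative_eq_intros)
        show ?thesis using has_derivative_compose[OF lin1] dg[OF b2] by blast
      qed
      have "(\<phi> has_derivative (\<lambda>t. Dg (x + h *\<^sub>R v + s *\<^sub>R u) (t *\<^sub>R u) - Dg (x + s *\<^sub>R u) (t *\<^sub>R u))) (at s)"
        unfolding \<phi>_def by (rule has_derivative_diff[OF d1 d2])
      then show ?thesis
        by (rule has_derivative_imp_has_field_derivative)
           (simp add: linear_cmul[OF bounded_linear.linear[OF l1(1)]] linear_cmul[OF bounded_linear.linear[OF l1(2)]] right_diff_distrib)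
    qed
    obtain \<sigma> where s1: "0 < \<sigma>" "\<sigma> < h" and mv: "\<phi> h - \<phi> 0 = (h - 0) * (Dg (x + h *\<^sub>R v + \<sigma> *\<^sub>R u) u - Dg (x + \<sigma> *\<^sub>R u) u)"
      using MVT2[of 0 h \<phi>, OF _ der] hh by auto
    define y1 where "y1 = x + h *\<^sub>R v + \<sigma> *\<^sub>R u"
    define y2 where "y2 = x + \<sigma> *\<^sub>R u"
    have n1: "norm (y1 - x) < d'" "norm (y2 - x) < d'"
      using near[of \<sigma>] s1 by (auto simp: y1_def y2_def)
    have E1: "\<bar>Dg y1 u - Dg x u - L (y1 - x)\<bar> \<le> e * norm (y1 - x)" by (rule d'P[OF n1(1)])
    have E2: "\<bar>Dg y2 u - Dg x u - L (y2 - x)\<bar> \<le> e * norm (y2 - x)" by (rule d'P[OF n1(2)])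
    have Ly: "L (y1 - x) - L (y2 - x) = h * L v"
    proof -
      have ll: "linear L" using bl bounded_linear.linear by blast
      have "L (y1 - x) - L (y2 - x) = L ((y1 - x) - (y2 - x))" by (simp add: linear_diff[OF ll])
      also have "(y1 - x) - (y2 - x) = h *\<^sub>R v" by (simp add: y1_def y2_def)
      finally show ?thesis by (simp add: linear_cmul[OF ll])
    qed
    have ny1: "norm (y1 - x) \<le> h * norm v + h * norm u"
    proof -
      have "norm (y1 - x) \<le> h * norm v + \<sigma> * norm u"
      proof -
        have "y1 - x = h *\<^sub>R v + \<sigma> *\<^sub>R u" by (simp add: y1_def)
        then have "norm (y1 - x) \<le> norm (h *\<^sub>R v) + norm (\<sigma> *\<^sub>R u)"
          using norm_triangle_ineq[of "h *\<^sub>R v" "\<sigma> *\<^sub>R u"] by (simp only:)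
        then show ?thesis using s1 hh by simp
      qed
      also have "\<dots> \<le> h * norm v + h * norm u" using s1 by (simp add: mult_right_mono)
      finally show ?thesis .
    qed
    have ny2: "norm (y2 - x) \<le> h * norm u" using s1 by (simp add: y2_def mult_right_mono)
    have key: "\<bar>(Dg y1 u - Dg y2 u) - h * L v\<bar> \<le> e * (h * norm v + 2 * h * norm u)"
    proof -
      have "\<bar>(Dg y1 u - Dg y2 u) - h * L v\<bar>
          = \<bar>(Dg y1 u - Dg x u - L (y1 - x)) - (Dg y2 u - Dg x u - L (y2 - x))\<bar>"
        using Ly by (simp add: algebra_simps)
      also have "\<dots> \<le> e * norm (y1 - x) + e * norm (y2 - x)" using E1 E2 by linarith
      also have "\<dots> \<le> e * (h * norm v + h * norm u) + e * (h * norm u)"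
        using ny1 ny2 e by (intro add_mono mult_left_mono) auto
      finally show ?thesis by (simp add: algebra_simps)
    qed
    have "g (x + h *\<^sub>R v + h *\<^sub>R u) - g (x + h *\<^sub>R u) - g (x + h *\<^sub>R v) + g x - h\<^sup>2 * L v
        = h * ((Dg y1 u - Dg y2 u) - h * L v)"
      using mv by (simp add: \<phi>_def y1_def y2_def power2_eq_square algebra_simps)
    then have "\<bar>g (x + h *\<^sub>R v + h *\<^sub>R u) - g (x + h *\<^sub>R u) - g (x + h *\<^sub>R v) + g x - h\<^sup>2 * L v\<bar>
        = h * \<bar>(Dg y1 u - Dg y2 u) - h * L v\<bar>" using hh by (simp add: abs_mult)
    also have "\<dots> \<le> h * (e * (h * norm v + 2 * h * norm u))"
      using key hh by (simp add: mult_left_mono)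
    finally show "\<bar>g (x + h *\<^sub>R v + h *\<^sub>R u) - g (x + h *\<^sub>R u) - g (x + h *\<^sub>R v) + g x - h\<^sup>2 * L v\<bar>
       \<le> e * h\<^sup>2 * (norm v + 2 * norm u)" by (simp add: power2_eq_square algebra_simps)
  qed
qed

lemma schwarz:
  fixes g :: "'a::real_normed_vector \<Rightarrow> real"
  assumes r: "0 < r" and dg: "\<And>z. z \<in> ball x r \<Longrightarrow> (g has_derivative Dg z) (at z)"
    and d1: "((\<lambda>z. Dg z u) has_derivative L1) (at x)" and d2: "((\<lambda>z. Dg z v) has_derivative L2) (at x)"
  shows "L1 v = L2 u"
proof (rule ccontr)
  assume ne: "L1 v \<noteq> L2 u"
  define \<delta> where "\<delta> = \<bar>L1 v - L2 u\<bar>"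
  define C where "C = 3 * norm u + 3 * norm v + 1"
  have Cpos: "C > 0" unfolding C_def using norm_ge_zero[of u] norm_ge_zero[of v] by linarith
  have dpos: "\<delta> > 0" using ne by (simp add: \<delta>_def)
  define e where "e = \<delta> / (2 * C)"
  have epos: "e > 0" using Cpos dpos by (simp add: e_def)
  obtain da where da: "da > 0" and A: "\<And>h. 0 < h \<and> h < da \<Longrightarrow>
     \<bar>g (x + h *\<^sub>R v + h *\<^sub>R u) - g (x + h *\<^sub>R u) - g (x + h *\<^sub>R v) + g x - h\<^sup>2 * L1 v\<bar>
       \<le> e * h\<^sup>2 * (norm v + 2 * norm u)"
    using schwarz_half[OF r dg d1 epos, of v] by blast
  obtain db where db: "db > 0" and B: "\<And>h. 0 < h \<and> h < db \<Longrightarrow>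
     \<bar>g (x + h *\<^sub>R u + h *\<^sub>R v) - g (x + h *\<^sub>R v) - g (x + h *\<^sub>R u) + g x - h\<^sup>2 * L2 u\<bar>
       \<le> e * h\<^sup>2 * (norm u + 2 * norm v)"
    using schwarz_half[OF r dg d2 epos, of u] by blast
  define h where "h = min da db / 2"
  have hp: "0 < h" "h < da" "h < db" using da db by (auto simp: h_def)
  have sw: "x + h *\<^sub>R u + h *\<^sub>R v = x + h *\<^sub>R v + h *\<^sub>R u" by (simp add: algebra_simps)
  note A1 = A[OF conjI[OF hp(1) hp(2)]]
  note B1 = B[OF conjI[OF hp(1) hp(3)]]
  have h2: "h\<^sup>2 > 0" using hp by simp
  have "h\<^sup>2 * \<delta> \<le> e * h\<^sup>2 * (norm v + 2 * norm u) + e * h\<^sup>2 * (norm u + 2 * norm v)"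
  proof -
    define D where "D = g (x + h *\<^sub>R v + h *\<^sub>R u) - g (x + h *\<^sub>R u) - g (x + h *\<^sub>R v) + g x"
    have D2: "g (x + h *\<^sub>R v + h *\<^sub>R u) - g (x + h *\<^sub>R v) - g (x + h *\<^sub>R u) + g x = D"
      by (simp add: D_def)
    have "\<bar>(D - h\<^sup>2 * L2 u) - (D - h\<^sup>2 * L1 v)\<bar> = \<bar>h\<^sup>2 * (L1 v - L2 u)\<bar>" by (simp add: algebra_simps)
    also have "\<dots> = h\<^sup>2 * \<delta>" by (simp add: abs_mult \<delta>_def)
    finally have "h\<^sup>2 * \<delta> \<le> \<bar>D - h\<^sup>2 * L2 u\<bar> + \<bar>D - h\<^sup>2 * L1 v\<bar>"
      by (metis abs_triangle_ineq4)
    then show ?thesis using A1 B1 unfolding sw D2 by (simp add: D_def)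
  qed
  also have "\<dots> = h\<^sup>2 * (e * (3 * norm u + 3 * norm v))" by (simp add: algebra_simps)
  also have "\<dots> < h\<^sup>2 * (e * C)" using h2 epos by (simp add: C_def)
  finally have "\<delta> < e * C" using h2 by simp
  moreover have "e * C = \<delta> / 2" using Cpos by (simp add: e_def)
  ultimately show False using dpos by simp
qed

lemma has_derivative_nth: "(f has_derivative f') F \<Longrightarrow> ((\<lambda>x. f x $ k) has_derivative (\<lambda>v. f' v $ k)) F"
  by (rule bounded_linear.has_derivative[OF bounded_linear_vec_nth])

lemma schwarz_vec:
  fixes f :: "'a::real_normed_vector \<Rightarrow> real^'n"
  assumes r: "0 < r" and df: "\<And>z. z \<in> ball x r \<Longrightarrow> f differentiable (at z)"
    and du: "(\<lambda>z. frechet_derivative f (at z) u) differentiable (at x)"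
    and dv: "(\<lambda>z. frechet_derivative f (at z) v) differentiable (at x)"
  shows "frechet_derivative (\<lambda>z. frechet_derivative f (at z) u) (at x) v
       = frechet_derivative (\<lambda>z. frechet_derivative f (at z) v) (at x) u"
proof (subst vec_eq_iff, intro allI)
  fix k
  show "frechet_derivative (\<lambda>z. frechet_derivative f (at z) u) (at x) v $ k
       = frechet_derivative (\<lambda>z. frechet_derivative f (at z) v) (at x) u $ k"
  proof (rule schwarz[OF r, where g = "\<lambda>z. f z $ k" and Dg = "\<lambda>z w. frechet_derivative f (at z) w $ k"])
    fix z assume "z \<in> ball x r"
    then show "((\<lambda>z. f z $ k) has_derivative (\<lambda>w. frechet_derivative f (at z) w $ k)) (at z)"
      using df frechet_derivative_works has_derivative_nth by blast
  next
    show "((\<lambda>z. frechet_derivative f (at z) u $ k) has_derivative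
       (\<lambda>w. frechet_derivative (\<lambda>z. frechet_derivative f (at z) u) (at x) w $ k)) (at x)"
      using du frechet_derivative_works has_derivative_nth by blast
  next
    show "((\<lambda>z. frechet_derivative f (at z) v $ k) has_derivative
       (\<lambda>w. frechet_derivative (\<lambda>z. frechet_derivative f (at z) v) (at x) w $ k)) (at x)"
      using dv frechet_derivative_works has_derivative_nth by blast
  qed
qed



lemma frechet_local:
  assumes "open S" "x \<in> S" "\<And>z. z \<in> S \<Longrightarrow> f z = g z"
  shows "frechet_derivative f (at x) = frechet_derivative g (at x)"
proof -
  have "(f has_derivative f') (at x) \<longleftrightarrow> (g has_derivative f') (at x)" for f'
  proof
    assume "(f has_derivative f') (at x)"
    then show "(g has_derivative f') (at x)"
      by (rule has_derivative_transform_within_open[OF _ assms(1,2)]) (simp add: assms(3))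
  next
    assume "(g has_derivative f') (at x)"
    then show "(f has_derivative f') (at x)"
      by (rule has_derivative_transform_within_open[OF _ assms(1,2)]) (simp add: assms(3))
  qed
  then show ?thesis unfolding frechet_derivative_def by simp
qed

lemma diff_local:
  assumes "open S" "x \<in> S" "\<And>z. z \<in> S \<Longrightarrow> f z = g z" "g differentiable (at x)"
  shows "f differentiable (at x)"
proof -
  obtain g' where "(g has_derivative g') (at x)" using assms(4) unfolding differentiable_def by blast
  then have "(f has_derivative g') (at x)"
    by (rule has_derivative_transform_within_open[OF _ assms(1,2)]) (simp add: assms(3))
  then show ?thesis unfolding differentiable_def by blast
qed

lemma pd2_local:
  assumes "open S" "x \<in> S" "\<And>z. z \<in> S \<Longrightarrow> f z = g z"
  shows "pd2 j f x = pd2 j g x"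
  unfolding pd2_def using frechet_local[OF assms] by simp

lemma pd2_inner:
  assumes "f differentiable (at x)" "g differentiable (at x)"
  shows "pd2 j (\<lambda>z. f z \<bullet> g z) x = pd2 j f x \<bullet> g x + f x \<bullet> pd2 j g x"
proof -
  have "((\<lambda>z. f z \<bullet> g z) has_derivative
      (\<lambda>h. f x \<bullet> frechet_derivative g (at x) h + frechet_derivative f (at x) h \<bullet> g x)) (at x)"
    using has_derivative_inner[OF assms(1)[unfolded frechet_derivative_works] assms(2)[unfolded frechet_derivative_works]] .
  then have "frechet_derivative (\<lambda>z. f z \<bullet> g z) (at x) = 
      (\<lambda>h. f x \<bullet> frechet_derivative g (at x) h + frechet_derivative f (at x) h \<bullet> g x)"
    by (rule frechet_derivative_at[symmetric])
  then show ?thesis unfolding pd2_def by simp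
qed

lemma pd2_inner_const:
  assumes "f differentiable (at x)"
  shows "pd2 j (\<lambda>z. c \<bullet> f z) x = c \<bullet> pd2 j f x"
proof -
  have "((\<lambda>z. c \<bullet> f z) has_derivative (\<lambda>h. c \<bullet> frechet_derivative f (at x) h)) (at x)"
    by (rule bounded_linear.has_derivative[OF bounded_linear_inner_right assms[unfolded frechet_derivative_works]])
  then have "frechet_derivative (\<lambda>z. c \<bullet> f z) (at x) = (\<lambda>h. c \<bullet> frechet_derivative f (at x) h)"
    by (rule frechet_derivative_at[symmetric])
  then show ?thesis unfolding pd2_def by simp
qed

lemma lift_lin: "bounded_linear (\<lambda>z::real^2. lift z 0)"
proof -
  have "linear (\<lambda>z::real^2. lift z 0)"
    unfolding linear_iff lift_def by (simp add: vec_eq_iff forall_3 vector_3)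
  then show ?thesis using linear_conv_bounded_linear by blast
qed

lemma lift_ax: "lift (ax2 1) 0 = ax3 1" "lift (ax2 2) 0 = ax3 2"
  by (simp_all add: lift_def ax2_def ax3_def)

lemma ent_lin: "bounded_linear (\<lambda>M. ent M k l)"
proof -
  have e: "ent M k l = (\<Sum>i\<in>UNIV. \<Sum>j\<in>UNIV. ax3 k $ i * M $ i $ j * ax3 l $ j)" for M
    by (simp add: ent_def matrix_vector_mult_def inner_vec_def sum_distrib_left mult.assoc)
  have "linear (\<lambda>M. ent M k l)"
    by (simp add: e linear_iff sum.distrib algebra_simps sum_distrib_left)
  then show ?thesis using linear_conv_bounded_linear by blast
qed

lemma Gent_deriv:
  assumes "G differentiable (at (lift x 0))"
  shows "((\<lambda>z. ent (G (lift z 0)) k l) has_derivative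
           (\<lambda>w. ent (frechet_derivative G (at (lift x 0)) (lift w 0)) k l)) (at x)"
proof -
  have l: "((\<lambda>z::real^2. lift z 0) has_derivative (\<lambda>z. lift z 0)) (at x)"
    by (rule bounded_linear_imp_has_derivative[OF lift_lin])
  have "((\<lambda>z. G (lift z 0)) has_derivative (\<lambda>w. frechet_derivative G (at (lift x 0)) (lift w 0))) (at x)"
    using has_derivative_compose[OF l assms[unfolded frechet_derivative_works]] .
  then show ?thesis by (rule bounded_linear.has_derivative[OF ent_lin])
qed

lemma Gent_diff:
  assumes "G differentiable (at (lift x 0))"
  shows "(\<lambda>z. ent (G (lift z 0)) k l) differentiable (at x)"
  using Gent_deriv[OF assms] unfolding differentiable_def by blast

lemma Gent_pd2:
  assumes "G differentiable (at (lift x 0))" "j = 1 \<or> j = 2"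
  shows "pd2 j (\<lambda>z. ent (G (lift z 0)) k l) x = ent (pd3 j G (lift x 0)) k l"
proof -
  have "pd2 j (\<lambda>z. ent (G (lift z 0)) k l) x = ent (frechet_derivative G (at (lift x 0)) (lift (ax2 j) 0)) k l"
    unfolding pd2_def frechet_derivative_at[OF Gent_deriv[OF assms(1)], symmetric] by simp
  then show ?thesis using assms(2) lift_ax unfolding pd3_def by auto
qed

lemma bb_cross: "bounded_bilinear cross3"
  using bilinear_cross bilinear_conv_bounded_bilinear by blast

lemma diff_cross:
  "f differentiable (at x) \<Longrightarrow> g differentiable (at x) \<Longrightarrow> (\<lambda>z. cross3 (f z) (g z)) differentiable (at x)"
  unfolding differentiable_def using bounded_bilinear.FDERIV[OF bb_cross] by blast

lemma diff_sqrt: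
  assumes "f differentiable (at x)" "f x > (0::real)"
  shows "(\<lambda>z. sqrt (f z)) differentiable (at x)"
proof -
  have "sqrt differentiable (at (f x))"
    using DERIV_real_sqrt[OF assms(2)] has_field_derivative_imp_has_derivative
    unfolding differentiable_def by blast
  then show ?thesis using differentiable_compose[OF _ assms(1)] by blast
qed

lemma diff_norm:
  fixes f :: "'a::real_normed_vector \<Rightarrow> real^3"
  assumes "f differentiable (at x)" "f x \<noteq> 0"
  shows "(\<lambda>z. norm (f z)) differentiable (at x)"
  using differentiable_compose[OF differentiable_norm_at[OF assms(2)] assms(1)] .

lemma smooth_on_diff: "smooth_on U f \<Longrightarrow> open U \<Longrightarrow> z \<in> U \<Longrightarrow> f differentiable (at z)"
  unfolding smooth_on_def using Ck.simps(2)[of 0 U f] differentiable_on_eq_differentiable_at by blast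

lemma smooth_on_deriv: "smooth_on U f \<Longrightarrow> smooth_on U (\<lambda>x. frechet_derivative f (at x) v)"
  unfolding smooth_on_def using Ck.simps(2) by blast

lemma smooth_on_pd2: "smooth_on U f \<Longrightarrow> smooth_on U (pd2 j f)"
proof -
  assume "smooth_on U f"
  from smooth_on_deriv[OF this, of "ax2 j"] show ?thesis
    by (simp add: pd2_def[abs_def])
qed



lemma quad3: "vector [x, y, z] \<bullet> (M *v vector [x, y, z]) =
   x * (M$1$1 * x + M$1$2 * y + M$1$3 * z) + y * (M$2$1 * x + M$2$2 * y + M$2$3 * z) + z * (M$3$1 * x + M$3$2 * y + M$3$3 * z)"
  for M :: "real^3^3"
  by (simp add: inner_vec_def matrix_vector_mult_def sum_3 vector_3)

lemma sym_entries:
  fixes M :: "real^3^3"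
  assumes "transpose M = M"
  shows "M$2$1 = M$1$2" "M$3$1 = M$1$3" "M$3$2 = M$2$3"
proof -
  have "M$i$j = M$j$i" for i j using arg_cong[OF assms, of "\<lambda>A. A$i$j"] by (simp add: transpose_def)
  then show "M$2$1 = M$1$2" "M$3$1 = M$1$3" "M$3$2 = M$2$3" by auto
qed

lemma posdef_facts:
  fixes M :: "real^3^3"
  assumes sym: "transpose M = M" and pd: "\<forall>v. v \<noteq> 0 \<longrightarrow> v \<bullet> (M *v v) > 0"
  shows "M$1$1 * M$2$2 - M$1$2 * M$2$1 > 0" "det M > 0" "M$1$1 > 0"
proof -
  note s = sym_entries[OF sym]
  have v1: "vector [1, 0, 0] \<noteq> (0::real^3)" by (simp add: vec_eq_iff forall_3)
  from pd v1 have "vector [1, 0, 0] \<bullet> (M *v vector [1, 0, 0]) > 0" by blast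
  then show m11: "M$1$1 > 0" by (simp add: quad3)
  then have v2: "vector [M$1$2, - M$1$1, 0] \<noteq> (0::real^3)" by (simp add: vec_eq_iff forall_3)
  have "vector [M$1$2, - M$1$1, 0] \<bullet> (M *v vector [M$1$2, - M$1$1, 0]) = M$1$1 * (M$1$1 * M$2$2 - M$1$2 * M$2$1)"
    unfolding quad3 s by (simp add: algebra_simps power2_eq_square)
  with pd v2 have "M$1$1 * (M$1$1 * M$2$2 - M$1$2 * M$2$1) > 0" by metis
  then show dm: "M$1$1 * M$2$2 - M$1$2 * M$2$1 > 0" using m11 by (simp add: zero_less_mult_iff)
  define v where "v = (vector [M$1$2 * M$2$3 - M$2$2 * M$1$3, M$1$2 * M$1$3 - M$1$1 * M$2$3, M$1$1 * M$2$2 - M$1$2 * M$2$1] :: real^3)"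
  have v3: "v \<noteq> 0" using dm by (auto simp: v_def vec_eq_iff forall_3)
  have "v \<bullet> (M *v v) = (M$1$1 * M$2$2 - M$1$2 * M$2$1) * det M"
    unfolding v_def quad3 det_3 s by (simp add: algebra_simps)
  with pd v3 have "(M$1$1 * M$2$2 - M$1$2 * M$2$1) * det M > 0" by metis
  then show "det M > 0" using dm by (simp add: zero_less_mult_iff)
qed

lemma inv2_mult:
  fixes N :: "real^2^2"
  assumes "det N \<noteq> 0"
  shows "matrix_inv N *v y = vector [(N$2$2 * y$1 - N$1$2 * y$2) / det N, (N$1$1 * y$2 - N$2$1 * y$1) / det N]"
proof -
  define c where "c = (vector [(N$2$2 * y$1 - N$1$2 * y$2) / det N, (N$1$1 * y$2 - N$2$1 * y$1) / det N] :: real^2)"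
  have inv: "invertible N" using assms invertible_det_nz by blast
  define d where "d = det N"
  have hd: "d = N$1$1 * N$2$2 - N$1$2 * N$2$1" "d \<noteq> 0" using assms by (simp_all add: d_def det_2)
  have e1: "N$1$1 * ((N$2$2 * y$1 - N$1$2 * y$2) / d) + N$1$2 * ((N$1$1 * y$2 - N$2$1 * y$1) / d) = y$1"
    using hd(2) by (simp add: field_simps) (simp add: hd(1) algebra_simps)
  have e2: "N$2$1 * ((N$2$2 * y$1 - N$1$2 * y$2) / d) + N$2$2 * ((N$1$1 * y$2 - N$2$1 * y$1) / d) = y$2"
    using hd(2) by (simp add: field_simps) (simp add: hd(1) algebra_simps)
  have "N *v c = y"
    unfolding c_def d_def[symmetric]
    using e1 e2 by (simp add: vec_eq_iff forall_2 matrix_vector_mult_def sum_2)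
  then have "matrix_inv N *v y = (matrix_inv N ** N) *v c" by (metis matrix_vector_mul_assoc)
  also have "\<dots> = c" using invertible_matrix_inv(2)[OF inv] by simp
  finally show ?thesis unfolding c_def .
qed

definition Bf :: "real^3 \<Rightarrow> real^3 \<Rightarrow> real^3^3 \<Rightarrow> real^3" where
  "Bf a b M = ((M$2$2 * M$1$3 - M$1$2 * M$2$3) / (M$1$1 * M$2$2 - M$1$2 * M$2$1)) *\<^sub>R a
     + ((M$1$1 * M$2$3 - M$2$1 * M$1$3) / (M$1$1 * M$2$2 - M$1$2 * M$2$1)) *\<^sub>R b
     + (sqrt (det M / (M$1$1 * M$2$2 - M$1$2 * M$2$1)) / norm (cross3 a b)) *\<^sub>R cross3 a b"

lemma b0_Bf:
  assumes "M$1$1 * M$2$2 - M$1$2 * M$2$1 \<noteq> 0" "M = G (lift x 0)"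
  shows "b0 G y0 x = Bf (pd2 1 y0 x) (pd2 2 y0 x) M"
proof -
  have dn: "det (minor22 M) \<noteq> 0" using assms(1) by (simp add: minor22_simps det_2)
  show ?thesis
    unfolding b0_def Let_def assms(2)[symmetric] jac2_mult inv2_mult[OF dn] Bf_def
    by (simp add: minor22_simps det_2 ent_simps ent_simps_Suc)
qed

lemma Bf_props:
  fixes M :: "real^3^3"
  assumes sym: "transpose M = M" and pd: "\<forall>v. v \<noteq> 0 \<longrightarrow> v \<bullet> (M *v v) > 0"
    and aa: "a \<bullet> a = M$1$1" and ab: "a \<bullet> b = M$1$2" and bb: "b \<bullet> b = M$2$2"
  shows "a \<bullet> Bf a b M = M$1$3" "b \<bullet> Bf a b M = M$2$3" "Bf a b M \<bullet> Bf a b M = M$3$3"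
    "cross3 a b \<noteq> 0" "(norm (cross3 a b))\<^sup>2 = M$1$1 * M$2$2 - M$1$2 * M$2$1"
proof -
  note s = sym_entries[OF sym]
  note pf = posdef_facts[OF sym pd]
  define d where "d = M$1$1 * M$2$2 - M$1$2 * M$2$1"
  have dpos: "d > 0" using pf by (simp add: d_def)
  define c where "c = cross3 a b"
  have "(norm c)\<^sup>2 + (a \<bullet> b)\<^sup>2 = (norm a * norm b)\<^sup>2" unfolding c_def by (rule norm_cross_dot)
  then have nc: "(norm c)\<^sup>2 = d"
    using aa ab bb unfolding d_def s power_mult_distrib power2_norm_eq_inner by (simp add: power2_eq_square)
  then show "(norm (cross3 a b))\<^sup>2 = M$1$1 * M$2$2 - M$1$2 * M$2$1" by (simp add: c_def d_def)
  have cne: "c \<noteq> 0" using nc dpos by auto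
  then show "cross3 a b \<noteq> 0" by (simp add: c_def)
  have ac: "a \<bullet> c = 0" "b \<bullet> c = 0" "c \<bullet> a = 0" "c \<bullet> b = 0"
    unfolding c_def using dot_cross_self by (auto simp: inner_commute)
  define E1 where "E1 = (M$2$2 * M$1$3 - M$1$2 * M$2$3) / d"
  define E2 where "E2 = (M$1$1 * M$2$3 - M$1$2 * M$1$3) / d"
  define t where "t = sqrt (det M / d) / norm c"
  have BF: "Bf a b M = E1 *\<^sub>R a + E2 *\<^sub>R b + t *\<^sub>R c"
    unfolding Bf_def E1_def E2_def t_def c_def d_def s ..
  have ba: "b \<bullet> a = M$1$2" using ab by (simp add: inner_commute)
  have "a \<bullet> Bf a b M = E1 * M$1$1 + E2 * M$1$2"
    unfolding BF by (simp add: inner_add_right ac aa ab)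
  also have "\<dots> = M$1$3" unfolding E1_def E2_def using dpos
    by (simp add: field_simps) (simp add: d_def s algebra_simps)
  finally show "a \<bullet> Bf a b M = M$1$3" .
  have "b \<bullet> Bf a b M = E1 * M$1$2 + E2 * M$2$2"
    unfolding BF by (simp add: inner_add_right ac ba bb)
  also have "\<dots> = M$2$3" unfolding E1_def E2_def using dpos
    by (simp add: field_simps) (simp add: d_def s algebra_simps)
  finally show "b \<bullet> Bf a b M = M$2$3" .
  have tc: "t * t * (c \<bullet> c) = det M / d"
  proof -
    have "c \<bullet> c = (norm c)\<^sup>2" by (simp add: power2_norm_eq_inner)
    moreover have "(sqrt (det M / d))\<^sup>2 = det M / d" using pf(2) dpos by simp
    ultimately show ?thesis unfolding t_def using nc dpos by (simp add: power2_eq_square field_simps)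
  qed
  have "Bf a b M \<bullet> Bf a b M = E1 * E1 * M$1$1 + 2 * E1 * E2 * M$1$2 + E2 * E2 * M$2$2 + t * t * (c \<bullet> c)"
    unfolding BF by (simp add: inner_add_left inner_add_right ac aa ab ba bb algebra_simps)
  also have "\<dots> = M$3$3" unfolding tc unfolding E1_def E2_def using dpos
    by (simp add: field_simps) (simp add: d_def s det_3 algebra_simps)
  finally show "Bf a b M \<bullet> Bf a b M = M$3$3" .
qed



lemma vec2_id: "vector [x$1, x$2] = (x::real^2)"
  by (simp add: vec_eq_iff forall_2)

lemma open_Omega: assumes "open \<omega>" shows "open (Omega \<omega>)"
proof -
  define P :: "real^3 \<Rightarrow> real^2" where "P p = vector [p$1, p$2]" for p
  have eq: "Omega \<omega> = P -` \<omega> \<inter> {p. p$3 < 1/2} \<inter> {p. p$3 > -1/2}"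
  proof (intro set_eqI iffI)
    fix p assume "p \<in> Omega \<omega>"
    then obtain x t where "p = lift x t" "x \<in> \<omega>" "-1/2 < t" "t < 1/2" unfolding Omega_def by blast
    then show "p \<in> P -` \<omega> \<inter> {p. p$3 < 1/2} \<inter> {p. p$3 > -1/2}"
      by (simp add: P_def lift_def vec2_id)
  next
    fix p assume p: "p \<in> P -` \<omega> \<inter> {p. p$3 < 1/2} \<inter> {p. p$3 > -1/2}"
    have "p = lift (P p) (p$3)" by (simp add: P_def lift_def vec_eq_iff forall_3)
    then show "p \<in> Omega \<omega>" using p unfolding Omega_def by blast
  qed
  moreover have "open (P -` \<omega>)"
  proof (rule continuous_open_vimage[OF assms])
    have "linear P" unfolding linear_iff P_def by (simp add: vec_eq_iff forall_2)
    then show "continuous (at x) P" for x using linear_continuous_at linear_conv_bounded_linear by blast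
  qed
  moreover have "open {p::real^3. p$3 < 1/2}" by (rule open_halfspace_component_lt_cart)
  moreover have "open {p::real^3. p$3 > -1/2}" by (rule open_halfspace_component_gt_cart)
  ultimately show ?thesis unfolding eq by (intro open_Int)
qed

lemma lift_in_Omega: "x \<in> \<omega> \<Longrightarrow> lift x 0 \<in> Omega \<omega>"
  unfolding Omega_def by force

lemma ent_simps_Suc2:
  "ent M (Suc 0) (Suc 0) = M$1$1" "ent M (Suc 0) 2 = M$1$2" "ent M (Suc 0) 3 = M$1$3"
  "ent M 2 (Suc 0) = M$2$1" "ent M 2 2 = M$2$2" "ent M 2 3 = M$2$3"
  "ent M 3 (Suc 0) = M$3$1" "ent M 3 2 = M$3$2" "ent M 3 3 = M$3$3"
  using ent_simps by simp_all

lemma ent_sym: "transpose M = M \<Longrightarrow> k \<in> {1,2,3} \<Longrightarrow> m \<in> {1,2,3} \<Longrightarrow> ent M k m = ent M m k"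
  using sym_entries[of M] by (auto simp: ent_simps ent_simps_Suc2)

lemma key_matrix:
  fixes Q Gm :: "real^3^3"
  assumes QG: "transpose Q ** Q = Gm" and dG: "det Gm \<noteq> 0" and uL: "transpose Q *v u = L"
  shows "u = Q *v (matrix_inv Gm *v L)"
proof -
  have "det Gm = det (transpose Q) * det Q" using QG det_mul by metis
  then have "det (transpose Q) \<noteq> 0" using dG by auto
  then have iQ: "invertible (transpose Q)" using invertible_det_nz by blast
  have iG: "invertible Gm" using dG invertible_det_nz by blast
  have "transpose Q *v (Q *v (matrix_inv Gm *v L)) = (transpose Q ** Q) *v (matrix_inv Gm *v L)"
    by (metis matrix_vector_mul_assoc)
  also have "\<dots> = (Gm ** matrix_inv Gm) *v L" unfolding QG by (metis matrix_vector_mul_assoc)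
  also have "\<dots> = L" using invertible_matrix_inv(1)[OF iG] by simp
  finally have "transpose Q *v (Q *v (matrix_inv Gm *v L)) = transpose Q *v u" using uL by simp
  then show ?thesis using inj_matrix_vector_mult[OF iQ] unfolding inj_def by metis
qed

lemma sum123: "(\<Sum>m\<in>{1,2,3::nat}. f m) = f 1 + f 2 + f 3"
  by (simp add: add.assoc)

lemma gvec_alt:
  "gvec G p k l = matrix_inv (G p) *v vector [
      (ent (pd3 l G p) 1 k + ent (pd3 k G p) 1 l - ent (pd3 1 G p) k l) / 2,
      (ent (pd3 l G p) 2 k + ent (pd3 k G p) 2 l - ent (pd3 2 G p) k l) / 2,
      (ent (pd3 l G p) 3 k + ent (pd3 k G p) 3 l - ent (pd3 3 G p) k l) / 2]"
  unfolding gvec_def christoffel_def sum123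
  by (simp only: vec_eq_iff forall_3 vector_3 matrix_vector_mult_def sum_3 ent_simps vec_lambda_beta)
     (simp add: field_simps)



locale L7 =
  fixes \<omega> :: "(real^2) set" and G :: "real^3 \<Rightarrow> real^3^3" and y0 :: "real^2 \<Rightarrow> real^3"
  assumes om: "open \<omega>" and Gs: "smooth_closure (Omega \<omega>) G"
    and Gpd: "\<forall>x\<in>closure (Omega \<omega>). transpose (G x) = G x \<and> (\<forall>v. v \<noteq> 0 \<longrightarrow> v \<bullet> (G x *v v) > 0)"
    and ys: "smooth_closure \<omega> y0"
    and iso: "\<forall>x\<in>\<omega>. transpose (jac2 y0 x) ** jac2 y0 x = minor22 (G (lift x 0))"
    and sff: "\<forall>x\<in>\<omega>. symm (transpose (jac2 y0 x) ** jac2 (b0 G y0) x)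
                 = (1/2) *\<^sub>R minor22 (pd3 3 G (lift x 0))"
begin

lemma G_symp: "p \<in> Omega \<omega> \<Longrightarrow> transpose (G p) = G p"
  using Gpd closure_subset by blast

lemma G_sym: "x \<in> \<omega> \<Longrightarrow> transpose (G (lift x 0)) = G (lift x 0)"
  using G_symp lift_in_Omega by blast

lemma G_pd: "x \<in> \<omega> \<Longrightarrow> \<forall>v. v \<noteq> 0 \<longrightarrow> v \<bullet> (G (lift x 0) *v v) > 0"
  using Gpd closure_subset lift_in_Omega by blast

lemma G_diffp: "p \<in> Omega \<omega> \<Longrightarrow> G differentiable (at p)"
proof -
  assume p: "p \<in> Omega \<omega>"
  obtain U where "open U" "closure (Omega \<omega>) \<subseteq> U" "smooth_on U G" using Gs unfolding smooth_closure_def by blast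
  then show ?thesis using p closure_subset smooth_on_diff by blast
qed

lemma G_diff: "x \<in> \<omega> \<Longrightarrow> G differentiable (at (lift x 0))"
  using G_diffp lift_in_Omega by blast

lemma Gd_sym:
  assumes x: "x \<in> \<omega>" and km: "k \<in> {1,2,3}" "m \<in> {1,2,3}"
  shows "ent (pd3 l G (lift x 0)) k m = ent (pd3 l G (lift x 0)) m k"
proof -
  define p where "p = lift x 0"
  have pO: "p \<in> Omega \<omega>" using x lift_in_Omega p_def by blast
  have hd: "((\<lambda>q. ent (G q) i j) has_derivative (\<lambda>h. ent (frechet_derivative G (at p) h) i j)) (at p)" for i j
    using bounded_linear.has_derivative[OF ent_lin G_diffp[OF pO, unfolded frechet_derivative_works]] .
  have "\<And>q. q \<in> Omega \<omega> \<Longrightarrow> ent (G q) k m = ent (G q) m k"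
    using ent_sym G_symp km by blast
  then have "frechet_derivative (\<lambda>q. ent (G q) k m) (at p) = frechet_derivative (\<lambda>q. ent (G q) m k) (at p)"
    using frechet_local[OF open_Omega[OF om] pO, of "\<lambda>q. ent (G q) k m" "\<lambda>q. ent (G q) m k"] by blast
  then have "(\<lambda>h. ent (frechet_derivative G (at p) h) k m) = (\<lambda>h. ent (frechet_derivative G (at p) h) m k)"
    using frechet_derivative_at[OF hd[of k m]] frechet_derivative_at[OF hd[of m k]] by simp
  then show ?thesis unfolding pd3_def p_def[symmetric] by metis
qed

lemma yU: "\<exists>U. open U \<and> \<omega> \<subseteq> U \<and> smooth_on U y0"
  using ys closure_subset unfolding smooth_closure_def by blast

lemma y_diff: "z \<in> \<omega> \<Longrightarrow> y0 differentiable (at z)"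
  using yU smooth_on_diff by blast

lemma a_diff: "z \<in> \<omega> \<Longrightarrow> pd2 k y0 differentiable (at z)"
  using yU smooth_on_diff smooth_on_pd2 by blast

lemma schw: assumes x: "x \<in> \<omega>" shows "pd2 i (pd2 j y0) x = pd2 j (pd2 i y0) x"
proof -
  obtain r where r: "r > 0" "ball x r \<subseteq> \<omega>" using om x open_contains_ball by blast
  have e: "pd2 k y0 = (\<lambda>z. frechet_derivative y0 (at z) (ax2 k))" for k by (simp add: pd2_def[abs_def])
  have "frechet_derivative (\<lambda>z. frechet_derivative y0 (at z) (ax2 j)) (at x) (ax2 i)
       = frechet_derivative (\<lambda>z. frechet_derivative y0 (at z) (ax2 i)) (at x) (ax2 j)"
    by (rule schwarz_vec[OF r(1)]) (use r y_diff a_diff[OF x] e in auto)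
  then show ?thesis by (simp add: e pd2_def)
qed

lemma gram:
  assumes z: "z \<in> \<omega>" and kl: "k \<in> {1,2}" "l \<in> {1,2}"
  shows "pd2 k y0 z \<bullet> pd2 l y0 z = ent (G (lift z 0)) k l"
proof -
  have "transpose (jac2 y0 z) ** jac2 y0 z = minor22 (G (lift z 0))" using iso z by blast
  then have e: "pd2 1 y0 z \<bullet> pd2 1 y0 z = G (lift z 0) $1$1" "pd2 1 y0 z \<bullet> pd2 2 y0 z = G (lift z 0) $1$2"
      "pd2 2 y0 z \<bullet> pd2 1 y0 z = G (lift z 0) $2$1" "pd2 2 y0 z \<bullet> pd2 2 y0 z = G (lift z 0) $2$2"
    unfolding jac2_gram minor22_simps vec22_eq by blast+
  show ?thesis using kl e by (auto simp: ent_simps ent_simps_Suc2)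
qed

lemma B_Bf: "z \<in> \<omega> \<Longrightarrow> b0 G y0 z = Bf (pd2 1 y0 z) (pd2 2 y0 z) (G (lift z 0))"
  using b0_Bf posdef_facts(1)[OF G_sym G_pd] by (metis less_irrefl)

lemma B_props:
  assumes z: "z \<in> \<omega>"
  shows "pd2 1 y0 z \<bullet> b0 G y0 z = ent (G (lift z 0)) 1 3"
    "pd2 2 y0 z \<bullet> b0 G y0 z = ent (G (lift z 0)) 2 3"
    "b0 G y0 z \<bullet> b0 G y0 z = ent (G (lift z 0)) 3 3"
    "cross3 (pd2 1 y0 z) (pd2 2 y0 z) \<noteq> 0"
proof -
  have g: "pd2 1 y0 z \<bullet> pd2 1 y0 z = G (lift z 0) $1$1" "pd2 1 y0 z \<bullet> pd2 2 y0 z = G (lift z 0) $1$2"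
     "pd2 2 y0 z \<bullet> pd2 2 y0 z = G (lift z 0) $2$2"
    using gram[OF z] by (auto simp: ent_simps ent_simps_Suc2)
  note bp = Bf_props[OF G_sym[OF z] G_pd[OF z] g]
  show "pd2 1 y0 z \<bullet> b0 G y0 z = ent (G (lift z 0)) 1 3"
    "pd2 2 y0 z \<bullet> b0 G y0 z = ent (G (lift z 0)) 2 3"
    "b0 G y0 z \<bullet> b0 G y0 z = ent (G (lift z 0)) 3 3"
    "cross3 (pd2 1 y0 z) (pd2 2 y0 z) \<noteq> 0"
    using bp B_Bf[OF z] by (simp_all add: ent_simps ent_simps_Suc2)
qed

lemma B_props2:
  assumes z: "z \<in> \<omega>" and k: "k \<in> {1,2}"
  shows "pd2 k y0 z \<bullet> b0 G y0 z = ent (G (lift z 0)) k 3"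
  using B_props(1,2)[OF z] k by auto

lemma diff_nth: "f differentiable F \<Longrightarrow> (\<lambda>x. f x $ k) differentiable F"
  unfolding differentiable_def using has_derivative_nth by blast

lemma Gl_diff: assumes x: "x \<in> \<omega>" shows "(\<lambda>z. G (lift z 0)) differentiable (at x)"
proof -
  have "(\<lambda>z::real^2. lift z 0) differentiable (at x)"
    using bounded_linear_imp_has_derivative[OF lift_lin] unfolding differentiable_def by blast
  then show ?thesis using differentiable_compose[of G "\<lambda>z. lift z 0" x, OF G_diff[OF x]] by blast
qed

lemma Gij_diff: "x \<in> \<omega> \<Longrightarrow> (\<lambda>z. G (lift z 0) $ i $ j) differentiable (at x)"
  using diff_nth[OF diff_nth[OF Gl_diff]] .

lemma det_diff: assumes x: "x \<in> \<omega>" shows "(\<lambda>z. det (G (lift z 0))) differentiable (at x)"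
  unfolding det_3 using Gij_diff[OF x] by (intro derivative_intros) auto

lemma Bf_diff:
  assumes x: "x \<in> \<omega>"
  shows "(\<lambda>z. Bf (pd2 1 y0 z) (pd2 2 y0 z) (G (lift z 0))) differentiable (at x)"
proof -
  define M where "M = G (lift x 0)"
  have dpos: "M$1$1 * M$2$2 - M$1$2 * M$2$1 > 0" and detpos: "det M > 0"
    using posdef_facts[OF G_sym[OF x] G_pd[OF x]] by (simp_all add: M_def)
  note gij = Gij_diff[OF x]
  have dd: "(\<lambda>z. G (lift z 0)$1$1 * G (lift z 0)$2$2 - G (lift z 0)$1$2 * G (lift z 0)$2$1) differentiable (at x)"
    using gij by (intro derivative_intros) auto
  have cd: "(\<lambda>z. cross3 (pd2 1 y0 z) (pd2 2 y0 z)) differentiable (at x)"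
    by (rule diff_cross[OF a_diff[OF x] a_diff[OF x]])
  have sq: "(\<lambda>z. sqrt (det (G (lift z 0)) / (G (lift z 0)$1$1 * G (lift z 0)$2$2 - G (lift z 0)$1$2 * G (lift z 0)$2$1))) differentiable (at x)"
    by (rule diff_sqrt) (use dd det_diff[OF x] dpos detpos in \<open>auto simp: M_def\<close>)
  have nd: "(\<lambda>z. norm (cross3 (pd2 1 y0 z) (pd2 2 y0 z))) differentiable (at x)"
    by (rule diff_norm[OF cd B_props(4)[OF x]])
  show ?thesis unfolding Bf_def
    using gij dd cd sq nd a_diff[OF x] dpos B_props(4)[OF x]
    by (intro derivative_intros) (auto simp: M_def)
qed

lemma B_diff: "x \<in> \<omega> \<Longrightarrow> b0 G y0 differentiable (at x)"
  using diff_local[OF om _ B_Bf Bf_diff] by blast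

lemma I1:
  assumes x: "x \<in> \<omega>" and jkl: "j \<in> {1,2}" "k \<in> {1,2}" "l \<in> {1,2}"
  shows "pd2 l y0 x \<bullet> pd2 j (pd2 k y0) x + pd2 k y0 x \<bullet> pd2 j (pd2 l y0) x = ent (pd3 j G (lift x 0)) k l"
proof -
  have "pd2 j (\<lambda>z. pd2 k y0 z \<bullet> pd2 l y0 z) x = pd2 j (\<lambda>z. ent (G (lift z 0)) k l) x"
    by (rule pd2_local[OF om x]) (use gram jkl in auto)
  also have "\<dots> = ent (pd3 j G (lift x 0)) k l" by (rule Gent_pd2[OF G_diff[OF x]]) (use jkl in auto)
  finally show ?thesis unfolding pd2_inner[OF a_diff[OF x] a_diff[OF x]] by (simp add: inner_commute)
qed

lemma I2:
  assumes x: "x \<in> \<omega>" and jk: "j \<in> {1,2}" "k \<in> {1,2}"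
  shows "pd2 k y0 x \<bullet> pd2 j (b0 G y0) x + b0 G y0 x \<bullet> pd2 j (pd2 k y0) x = ent (pd3 j G (lift x 0)) k 3"
proof -
  have "pd2 j (\<lambda>z. pd2 k y0 z \<bullet> b0 G y0 z) x = pd2 j (\<lambda>z. ent (G (lift z 0)) k 3) x"
    by (rule pd2_local[OF om x]) (use B_props2 jk in auto)
  also have "\<dots> = ent (pd3 j G (lift x 0)) k 3" by (rule Gent_pd2[OF G_diff[OF x]]) (use jk in auto)
  finally show ?thesis unfolding pd2_inner[OF a_diff[OF x] B_diff[OF x]] by (simp add: inner_commute)
qed

lemma I3:
  assumes x: "x \<in> \<omega>" and j: "j \<in> {1,2}"
  shows "2 * (b0 G y0 x \<bullet> pd2 j (b0 G y0) x) = ent (pd3 j G (lift x 0)) 3 3"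
proof -
  have "pd2 j (\<lambda>z. b0 G y0 z \<bullet> b0 G y0 z) x = pd2 j (\<lambda>z. ent (G (lift z 0)) 3 3) x"
    by (rule pd2_local[OF om x]) (use B_props(3) in auto)
  also have "\<dots> = ent (pd3 j G (lift x 0)) 3 3" by (rule Gent_pd2[OF G_diff[OF x]]) (use j in auto)
  finally show ?thesis unfolding pd2_inner[OF B_diff[OF x] B_diff[OF x]] by (simp add: inner_commute)
qed

lemma I4:
  assumes x: "x \<in> \<omega>" and ij: "i \<in> {1,2}" "j \<in> {1,2}"
  shows "pd2 i y0 x \<bullet> pd2 j (b0 G y0) x + pd2 j y0 x \<bullet> pd2 i (b0 G y0) x = ent (pd3 3 G (lift x 0)) i j"
proof -
  define D where "D = pd3 3 G (lift x 0)"
  have "symm (transpose (jac2 y0 x) ** jac2 (b0 G y0) x) = (1/2) *\<^sub>R minor22 D"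
    using sff x by (simp add: D_def)
  then have e: "pd2 1 y0 x \<bullet> pd2 1 (b0 G y0) x = D$1$1 / 2"
    "(pd2 1 y0 x \<bullet> pd2 2 (b0 G y0) x + pd2 2 y0 x \<bullet> pd2 1 (b0 G y0) x) / 2 = D$1$2 / 2"
    "(pd2 1 y0 x \<bullet> pd2 2 (b0 G y0) x + pd2 2 y0 x \<bullet> pd2 1 (b0 G y0) x) / 2 = D$2$1 / 2"
    "pd2 2 y0 x \<bullet> pd2 2 (b0 G y0) x = D$2$2 / 2"
    unfolding jac2_gram symm_simps minor22_simps by (simp_all add: vec_eq_iff forall_2)
  show ?thesis using ij e unfolding D_def[symmetric] by (auto simp: ent_simps ent_simps_Suc2 inner_commute)
qed

end




lemma half: "2 * (x::real) = y \<Longrightarrow> x = y / 2" by simp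

context L7 begin

lemma col1_a:
  assumes x: "x \<in> \<omega>" and ijm: "i \<in> {1,2}" "j \<in> {1,2}" "m \<in> {1,2}"
  shows "pd2 m y0 x \<bullet> pd2 i (pd2 j y0) x
       = (ent (pd3 j G (lift x 0)) m i + ent (pd3 i G (lift x 0)) m j - ent (pd3 m G (lift x 0)) i j) / 2"
proof -
  have s1: "pd2 j (pd2 i y0) x = pd2 i (pd2 j y0) x" "pd2 m (pd2 j y0) x = pd2 j (pd2 m y0) x"
     "pd2 m (pd2 i y0) x = pd2 i (pd2 m y0) x" using schw[OF x] by auto
  have e1: "pd2 m y0 x \<bullet> pd2 i (pd2 j y0) x + pd2 j y0 x \<bullet> pd2 i (pd2 m y0) x = ent (pd3 i G (lift x 0)) j m"
    using I1[OF x ijm(1) ijm(2) ijm(3)] .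
  have e2: "pd2 m y0 x \<bullet> pd2 j (pd2 i y0) x + pd2 i y0 x \<bullet> pd2 j (pd2 m y0) x = ent (pd3 j G (lift x 0)) i m"
    using I1[OF x ijm(2) ijm(1) ijm(3)] .
  have e3: "pd2 j y0 x \<bullet> pd2 m (pd2 i y0) x + pd2 i y0 x \<bullet> pd2 m (pd2 j y0) x = ent (pd3 m G (lift x 0)) i j"
    using I1[OF x ijm(3) ijm(1) ijm(2)] .
  have g1: "ent (pd3 j G (lift x 0)) m i = ent (pd3 j G (lift x 0)) i m"
    using Gd_sym[OF x] ijm by auto
  have g2: "ent (pd3 i G (lift x 0)) m j = ent (pd3 i G (lift x 0)) j m"
    using Gd_sym[OF x] ijm by auto
  show ?thesis apply (rule half) using e1 e2 e3 unfolding s1 g1 g2 by linarith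
qed

lemma col1_B:
  assumes x: "x \<in> \<omega>" and ij: "i \<in> {1,2}" "j \<in> {1,2}"
  shows "b0 G y0 x \<bullet> pd2 i (pd2 j y0) x
       = (ent (pd3 j G (lift x 0)) 3 i + ent (pd3 i G (lift x 0)) 3 j - ent (pd3 3 G (lift x 0)) i j) / 2"
proof -
  have s1: "pd2 j (pd2 i y0) x = pd2 i (pd2 j y0) x" using schw[OF x] by auto
  note e1 = I2[OF x ij(1) ij(2)]
  note e2 = I2[OF x ij(2) ij(1)]
  note e3 = I4[OF x ij(1) ij(2)]
  have g1: "ent (pd3 j G (lift x 0)) 3 i = ent (pd3 j G (lift x 0)) i 3"
    using Gd_sym[OF x] ij by auto
  have g2: "ent (pd3 i G (lift x 0)) 3 j = ent (pd3 i G (lift x 0)) j 3"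
    using Gd_sym[OF x] ij by auto
  show ?thesis apply (rule half) using e1 e2 e3 unfolding s1 g1 g2 by linarith
qed

lemma col2_a:
  assumes x: "x \<in> \<omega>" and im: "i \<in> {1,2}" "m \<in> {1,2}"
  shows "pd2 m y0 x \<bullet> pd2 i (b0 G y0) x
       = (ent (pd3 3 G (lift x 0)) m i + ent (pd3 i G (lift x 0)) m 3 - ent (pd3 m G (lift x 0)) i 3) / 2"
proof -
  note e1 = I2[OF x im(1) im(2)]
  have e2: "2 * (b0 G y0 x \<bullet> pd2 i (pd2 m y0) x)
       = ent (pd3 m G (lift x 0)) 3 i + ent (pd3 i G (lift x 0)) 3 m - ent (pd3 3 G (lift x 0)) i m"
    using col1_B[OF x im(1) im(2)] by simp
  have g: "ent (pd3 i G (lift x 0)) 3 m = ent (pd3 i G (lift x 0)) m 3"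
     "ent (pd3 3 G (lift x 0)) m i = ent (pd3 3 G (lift x 0)) i m"
     "ent (pd3 m G (lift x 0)) i 3 = ent (pd3 m G (lift x 0)) 3 i"
    using Gd_sym[OF x] im by auto
  show ?thesis apply (rule half) using e1 e2 unfolding g by linarith
qed

lemma col2_B:
  assumes x: "x \<in> \<omega>" and i: "i \<in> {1,2}"
  shows "b0 G y0 x \<bullet> pd2 i (b0 G y0) x
       = (ent (pd3 3 G (lift x 0)) 3 i + ent (pd3 i G (lift x 0)) 3 3 - ent (pd3 3 G (lift x 0)) i 3) / 2"
proof -
  have g: "ent (pd3 3 G (lift x 0)) 3 i = ent (pd3 3 G (lift x 0)) i 3"
    using Gd_sym[OF x] i by auto
  show ?thesis apply (rule half) using I3[OF x i] unfolding g by linarith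
qed

lemma QG: assumes x: "x \<in> \<omega>" shows "transpose (Q0 G y0 x) ** Q0 G y0 x = G (lift x 0)"
proof -
  note s = sym_entries[OF G_sym[OF x]]
  have g: "pd2 1 y0 x \<bullet> pd2 1 y0 x = G (lift x 0) $1$1" "pd2 1 y0 x \<bullet> pd2 2 y0 x = G (lift x 0) $1$2"
     "pd2 2 y0 x \<bullet> pd2 2 y0 x = G (lift x 0) $2$2"
    using gram[OF x] by (auto simp: ent_simps ent_simps_Suc2)
  note b = B_props[OF x]
  show ?thesis unfolding Q0_def gram3
    using g b s by (simp add: vec_eq_iff forall_3 inner_commute ent_simps ent_simps_Suc2)
qed

lemma detG: "x \<in> \<omega> \<Longrightarrow> det (G (lift x 0)) \<noteq> 0"
  using posdef_facts(2)[OF G_sym G_pd] by (metis less_irrefl)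

lemma Qt_inv: assumes x: "x \<in> \<omega>" shows "invertible (transpose (Q0 G y0 x))"
proof -
  have "det (G (lift x 0)) = det (transpose (Q0 G y0 x)) * det (Q0 G y0 x)"
    using QG[OF x] det_mul by metis
  then show ?thesis using detG[OF x] invertible_det_nz by fastforce
qed

lemma colvec: "transpose (Q0 G y0 x) *v u = vector [pd2 1 y0 x \<bullet> u, pd2 2 y0 x \<bullet> u, b0 G y0 x \<bullet> u]"
  unfolding Q0_def cols3_transp_mult ..

lemma part1_col1:
  assumes x: "x \<in> \<omega>" and ij: "i \<in> {1,2}" "j \<in> {1,2}"
  shows "pd2 i (pd2 j y0) x = Q0 G y0 x *v gvec G (lift x 0) i j"
proof -
  have c1: "pd2 1 y0 x \<bullet> pd2 i (pd2 j y0) x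
       = (ent (pd3 j G (lift x 0)) 1 i + ent (pd3 i G (lift x 0)) 1 j - ent (pd3 1 G (lift x 0)) i j) / 2"
    by (rule col1_a[OF x ij]) simp
  have c2: "pd2 2 y0 x \<bullet> pd2 i (pd2 j y0) x
       = (ent (pd3 j G (lift x 0)) 2 i + ent (pd3 i G (lift x 0)) 2 j - ent (pd3 2 G (lift x 0)) i j) / 2"
    by (rule col1_a[OF x ij]) simp
  show ?thesis unfolding gvec_alt
    by (rule key_matrix[OF QG[OF x] detG[OF x]]) (simp only: colvec c1 c2 col1_B[OF x ij])
qed

lemma part1_col2:
  assumes x: "x \<in> \<omega>" and i: "i \<in> {1,2}"
  shows "pd2 i (b0 G y0) x = Q0 G y0 x *v gvec G (lift x 0) i 3"
proof -
  have c1: "pd2 1 y0 x \<bullet> pd2 i (b0 G y0) x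
       = (ent (pd3 3 G (lift x 0)) 1 i + ent (pd3 i G (lift x 0)) 1 3 - ent (pd3 1 G (lift x 0)) i 3) / 2"
    by (rule col2_a[OF x i]) simp
  have c2: "pd2 2 y0 x \<bullet> pd2 i (b0 G y0) x
       = (ent (pd3 3 G (lift x 0)) 2 i + ent (pd3 i G (lift x 0)) 2 3 - ent (pd3 2 G (lift x 0)) i 3) / 2"
    by (rule col2_a[OF x i]) simp
  show ?thesis unfolding gvec_alt
    by (rule key_matrix[OF QG[OF x] detG[OF x]]) (simp only: colvec c1 c2 col2_B[OF x i])
qed

lemma part1_col3:
  assumes x: "x \<in> \<omega>"
  shows "d0 G y0 x = Q0 G y0 x *v gvec G (lift x 0) 3 3"
  unfolding gvec_alt
proof (rule key_matrix[OF QG[OF x] detG[OF x]])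
  define D where "D = pd3 3 G (lift x 0)"
  define v where "v = D *v ax3 3 - (1/2 * ent D 3 3) *\<^sub>R ax3 3
        - vector [pd2 1 (b0 G y0) x \<bullet> b0 G y0 x, pd2 2 (b0 G y0) x \<bullet> b0 G y0 x, 0]"
  have "d0 G y0 x = matrix_inv (transpose (Q0 G y0 x)) *v v"
    unfolding d0_def Let_def v_def D_def ..
  then have "transpose (Q0 G y0 x) *v d0 G y0 x = (transpose (Q0 G y0 x) ** matrix_inv (transpose (Q0 G y0 x))) *v v"
    by (metis matrix_vector_mul_assoc)
  also have "\<dots> = v" using invertible_matrix_inv(1)[OF Qt_inv[OF x]] by simp
  also have "\<dots> = vector [(ent (pd3 3 G (lift x 0)) 1 3 + ent (pd3 3 G (lift x 0)) 1 3 - ent (pd3 1 G (lift x 0)) 3 3) / 2,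
      (ent (pd3 3 G (lift x 0)) 2 3 + ent (pd3 3 G (lift x 0)) 2 3 - ent (pd3 2 G (lift x 0)) 3 3) / 2,
      (ent (pd3 3 G (lift x 0)) 3 3 + ent (pd3 3 G (lift x 0)) 3 3 - ent (pd3 3 G (lift x 0)) 3 3) / 2]"
  proof -
    have i1: "pd2 1 (b0 G y0) x \<bullet> b0 G y0 x = ent (pd3 1 G (lift x 0)) 3 3 / 2"
      using I3[OF x, of 1] by (simp add: inner_commute)
    have i2: "pd2 2 (b0 G y0) x \<bullet> b0 G y0 x = ent (pd3 2 G (lift x 0)) 3 3 / 2"
      using I3[OF x, of 2] by (simp add: inner_commute)
    show ?thesis unfolding v_def i1 i2 D_def
      by (simp add: vec_eq_iff forall_3 ent_simps ent_simps_Suc2 ax3_def matrix_vector_mult_def sum_3 field_simps)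
  qed
  finally show "transpose (Q0 G y0 x) *v d0 G y0 x = vector [
      (ent (pd3 3 G (lift x 0)) 1 3 + ent (pd3 3 G (lift x 0)) 1 3 - ent (pd3 1 G (lift x 0)) 3 3) / 2,
      (ent (pd3 3 G (lift x 0)) 2 3 + ent (pd3 3 G (lift x 0)) 2 3 - ent (pd3 2 G (lift x 0)) 3 3) / 2,
      (ent (pd3 3 G (lift x 0)) 3 3 + ent (pd3 3 G (lift x 0)) 3 3 - ent (pd3 3 G (lift x 0)) 3 3) / 2]" .
qed

lemma part1:
  assumes x: "x \<in> \<omega>" and ij: "i \<in> {1,2}" "j \<in> {1,2}"
  shows "cols3 (pd2 i (pd2 j y0) x) (pd2 i (b0 G y0) x) (d0 G y0 x)
            = Q0 G y0 x ** cols3 (gvec G (lift x 0) i j) (gvec G (lift x 0) i 3) (gvec G (lift x 0) 3 3)"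
  unfolding mult_cols3 cols3_eq using part1_col1[OF x ij] part1_col2[OF x ij(1)] part1_col3[OF x] by simp

end



lemma triple_cyc: "x \<bullet> cross3 y z = y \<bullet> cross3 z x"
  by (simp add: cross3_def inner_vec_def sum_3 algebra_simps)

lemma mv_inner: "(M *v g) \<bullet> w = g \<bullet> (transpose M *v w)" for M :: "real^3^3"
  by (simp add: inner_vec_def matrix_vector_mult_def sum_3 transpose_def algebra_simps)

lemma triple_det: "x \<bullet> cross3 y z = det (transpose (cols3 x y z))"
  by (simp add: dot_cross_det cols3_def)

context L7 begin

lemma Qt_apply:
  assumes z: "z \<in> \<omega>"
  shows "transpose (Q0 G y0 z) *v (matrix_inv (transpose (Q0 G y0 z)) *v v) = v"
proof -
  have "transpose (Q0 G y0 z) *v (matrix_inv (transpose (Q0 G y0 z)) *v v)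
      = (transpose (Q0 G y0 z) ** matrix_inv (transpose (Q0 G y0 z))) *v v"
    by (metis matrix_vector_mul_assoc)
  also have "\<dots> = v" using invertible_matrix_inv(1)[OF Qt_inv[OF z]] by simp
  finally show ?thesis .
qed

definition Wq :: "(real^2 \<Rightarrow> real^3) \<Rightarrow> real^2 \<Rightarrow> real^3" where
  "Wq q z = (1 / (pd2 1 y0 z \<bullet> cross3 (pd2 2 y0 z) (b0 G y0 z))) *\<^sub>R
     ((q z $ 1) *\<^sub>R cross3 (pd2 2 y0 z) (b0 G y0 z) + (q z $ 2) *\<^sub>R cross3 (b0 G y0 z) (pd2 1 y0 z)
      + (q z $ 3) *\<^sub>R cross3 (pd2 1 y0 z) (pd2 2 y0 z))"

lemma D_ne: assumes z: "z \<in> \<omega>" shows "pd2 1 y0 z \<bullet> cross3 (pd2 2 y0 z) (b0 G y0 z) \<noteq> 0"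
proof -
  have "det (transpose (Q0 G y0 z)) \<noteq> 0" using Qt_inv[OF z] invertible_det_nz by blast
  then show ?thesis unfolding triple_det Q0_def .
qed

lemma Wq_eq:
  assumes z: "z \<in> \<omega>"
  shows "matrix_inv (transpose (Q0 G y0 z)) *v q z = Wq q z"
proof -
  define a b B where "a = pd2 1 y0 z" "b = pd2 2 y0 z" "B = b0 G y0 z"
  define D where "D = a \<bullet> cross3 b B"
  have Dn: "D \<noteq> 0" using D_ne[OF z] by (simp add: D_def a_b_B_def)
  have t1: "b \<bullet> cross3 B a = D" "B \<bullet> cross3 a b = D" unfolding D_def using triple_cyc by metis+
  have z1: "a \<bullet> cross3 B a = 0" "a \<bullet> cross3 a b = 0" "b \<bullet> cross3 b B = 0" "b \<bullet> cross3 a b = 0"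
     "B \<bullet> cross3 b B = 0" "B \<bullet> cross3 B a = 0"
    using dot_cross_self by auto
  have W: "Wq q z = (1 / D) *\<^sub>R ((q z $ 1) *\<^sub>R cross3 b B + (q z $ 2) *\<^sub>R cross3 B a + (q z $ 3) *\<^sub>R cross3 a b)"
    unfolding Wq_def D_def a_b_B_def ..
  have "transpose (Q0 G y0 z) *v Wq q z = vector [a \<bullet> Wq q z, b \<bullet> Wq q z, B \<bullet> Wq q z]"
    unfolding colvec a_b_B_def ..
  also have "\<dots> = q z" unfolding W using Dn
    by (simp add: inner_add_right z1 t1 D_def[symmetric] vec_eq_iff forall_3)
  finally have e: "transpose (Q0 G y0 z) *v Wq q z = q z" .
  have "matrix_inv (transpose (Q0 G y0 z)) *v q z = (matrix_inv (transpose (Q0 G y0 z)) ** transpose (Q0 G y0 z)) *v Wq q z"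
    unfolding e[symmetric] by (metis matrix_vector_mul_assoc)
  also have "\<dots> = Wq q z" using invertible_matrix_inv(2)[OF Qt_inv[OF z]] by simp
  finally show ?thesis .
qed

lemma Wq_diff:
  assumes x: "x \<in> \<omega>" and q: "q differentiable (at x)"
  shows "Wq q differentiable (at x)"
proof -
  have c1: "(\<lambda>z. cross3 (pd2 2 y0 z) (b0 G y0 z)) differentiable (at x)"
    by (rule diff_cross[OF a_diff[OF x] B_diff[OF x]])
  have c2: "(\<lambda>z. cross3 (b0 G y0 z) (pd2 1 y0 z)) differentiable (at x)"
    by (rule diff_cross[OF B_diff[OF x] a_diff[OF x]])
  have c3: "(\<lambda>z. cross3 (pd2 1 y0 z) (pd2 2 y0 z)) differentiable (at x)"
    by (rule diff_cross[OF a_diff[OF x] a_diff[OF x]])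
  have dd: "(\<lambda>z. pd2 1 y0 z \<bullet> cross3 (pd2 2 y0 z) (b0 G y0 z)) differentiable (at x)"
    using a_diff[OF x] c1 by simp
  have qk: "(\<lambda>z. q z $ k) differentiable (at x)" for k by (rule diff_nth[OF q])
  show ?thesis unfolding Wq_def[abs_def]
    using c1 c2 c3 dd qk D_ne[OF x] by (intro derivative_intros) auto
qed

lemma part2:
  assumes x: "x \<in> \<omega>" and qs: "smooth_on \<omega> q" and ij: "i \<in> {1,2}" "j \<in> {1,2}"
  shows "pd2 i y0 x \<bullet> pd2 j (\<lambda>z. matrix_inv (transpose (Q0 G y0 z)) *v q z) x
       = ax3 i \<bullet> pd2 j q x - q x \<bullet> gvec G (lift x 0) i j"
proof -
  define w where "w = (\<lambda>z. matrix_inv (transpose (Q0 G y0 z)) *v q z)"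
  have qd: "q differentiable (at z)" if "z \<in> \<omega>" for z using smooth_on_diff[OF qs om that] .
  have wd: "w differentiable (at x)"
    by (rule diff_local[OF om x _ Wq_diff[OF x qd[OF x]]]) (simp add: w_def Wq_eq)
  have iden: "pd2 i y0 z \<bullet> w z = ax3 i \<bullet> q z" if z: "z \<in> \<omega>" for z
  proof -
    have "transpose (Q0 G y0 z) *v w z = q z" unfolding w_def by (rule Qt_apply[OF z])
    then have "vector [pd2 1 y0 z \<bullet> w z, pd2 2 y0 z \<bullet> w z, b0 G y0 z \<bullet> w z] = q z" unfolding colvec .
    then show ?thesis using ij by (auto simp: vec_eq_iff forall_3 ax3_def inner_vec_def sum_3)
  qed
  have "pd2 j (\<lambda>z. pd2 i y0 z \<bullet> w z) x = pd2 j (\<lambda>z. ax3 i \<bullet> q z) x"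
    by (rule pd2_local[OF om x]) (simp add: iden)
  then have e: "pd2 j (pd2 i y0) x \<bullet> w x + pd2 i y0 x \<bullet> pd2 j w x = ax3 i \<bullet> pd2 j q x"
    unfolding pd2_inner[OF a_diff[OF x] wd] pd2_inner_const[OF qd[OF x]] .
  have "pd2 j (pd2 i y0) x = Q0 G y0 x *v gvec G (lift x 0) i j"
    using schw[OF x] part1_col1[OF x ij] by metis
  then have "pd2 j (pd2 i y0) x \<bullet> w x = (Q0 G y0 x *v gvec G (lift x 0) i j) \<bullet> w x" by simp
  also have "\<dots> = gvec G (lift x 0) i j \<bullet> (transpose (Q0 G y0 x) *v w x)" by (rule mv_inner)
  also have "\<dots> = gvec G (lift x 0) i j \<bullet> q x" unfolding w_def by (simp only: Qt_apply[OF x])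
  finally have "pd2 j (pd2 i y0) x \<bullet> w x = gvec G (lift x 0) i j \<bullet> q x" .
  then show ?thesis using e unfolding w_def[symmetric] by (simp add: inner_commute)
qed

end


theorem lemma7p1:
  fixes \<omega> :: "(real^2) set"
    and G :: "real^3 \<Rightarrow> real^3^3"
    and y0 :: "real^2 \<Rightarrow> real^3"
  assumes "open \<omega>" and "bounded \<omega>" and "connected \<omega>" and "lipschitz_domain \<omega>"
    and "smooth_closure (Omega \<omega>) G"
    and "\<forall>x\<in>closure (Omega \<omega>). transpose (G x) = G x \<and> (\<forall>v. v \<noteq> 0 \<longrightarrow> v \<bullet> (G x *v v) > 0)"
    and "smooth_closure \<omega> y0"
    and "\<forall>x\<in>\<omega>. transpose (jac2 y0 x) ** jac2 y0 x = minor22 (G (lift x 0))"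
    and "\<forall>x\<in>\<omega>. symm (transpose (jac2 y0 x) ** jac2 (b0 G y0) x)
                 = (1/2) *\<^sub>R minor22 (pd3 3 G (lift x 0))"
  shows "(\<forall>i\<in>{1,2}. \<forall>j\<in>{1,2}. \<forall>x\<in>\<omega>.
            cols3 (pd2 i (pd2 j y0) x) (pd2 i (b0 G y0) x) (d0 G y0 x)
            = Q0 G y0 x ** cols3 (gvec G (lift x 0) i j) (gvec G (lift x 0) i 3) (gvec G (lift x 0) 3 3))
       \<and> (\<forall>q :: real^2 \<Rightarrow> real^3. smooth_on \<omega> q \<longrightarrow>
            (\<forall>i\<in>{1,2}. \<forall>j\<in>{1,2}. \<forall>x\<in>\<omega>.
               pd2 i y0 x \<bullet> pd2 j (\<lambda>z. matrix_inv (transpose (Q0 G y0 z)) *v q z) x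
               = ax3 i \<bullet> pd2 j q x - q x \<bullet> gvec G (lift x 0) i j))"
  proof -
  interpret L7 \<omega> G y0
    by unfold_locales (use assms in auto)
  show ?thesis using part1 part2 by auto
qed

end
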